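(* Let $P$ be a 2-dimensional plane or a sphere in $\mathbb R^3$ with its usual induced surface measure $dS$. Let $0<a<2$, $0<b<2$ with $a+b>2$, and let $\xi\in\mathbb R^3$. Then there exists $C$ independent of $\xi$ and $P$ such that $$\int_P\frac{1}{|\xi-\eta|^a|\eta|^b}\,dS(\eta)\le\frac{C}{|\xi|^{a+b-2}}.$$ *)

theory Defs
  imports "HOL-Analysis.Analysis"
begin

text \<open>Surface measure on the affine plane through p spanned by the orthonormal
  vectors u, v: push-forward of 2-dimensional Lebesgue measure under the
  isometric parametrisation (s,t) maps to p + s u + t v.\<close>
definition plane_measure :: "real^3 \<Rightarrow> real^3 \<Rightarrow> real^3 \<Rightarrow> (real^3) measure" where
  "plane_measure p u v =
     distr (lborel :: (real \<times> real) measure) borel (\<lambda>(s, t). p + s *\<^sub>R u + t *\<^sub>R v)"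

definition sphere_measure :: "real^3 \<Rightarrow> real \<Rightarrow> (real^3) measure" where
  "sphere_measure c r =
     distr (density (lborel :: (real \<times> real) measure)
              (\<lambda>(\<theta>, \<phi>). ennreal (indicator ({0<..<pi} \<times> {0<..<2*pi}) (\<theta>, \<phi>) * r\<^sup>2 * sin \<theta>)))
       borel
       (\<lambda>(\<theta>, \<phi>). c + r *\<^sub>R vector [sin \<theta> * cos \<phi>, sin \<theta> * sin \<phi>, cos \<theta>])"

definition plane_or_sphere_measures :: "(real^3) measure set" where
  "plane_or_sphere_measures =
     {plane_measure p u v | p u v. u \<bullet> u = 1 \<and> v \<bullet> v = 1 \<and> u \<bullet> v = 0}
     \<union> {sphere_measure c r | c r. r > 0}"

end

theory Submission
  imports Defs
begin


definition wt :: "real \<Rightarrow> real \<Rightarrow> real \<Rightarrow> real \<Rightarrow> real" where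
  "wt \<alpha> \<beta> \<rho>0 \<rho> = (if \<rho> = 0 then 0 else \<rho> powr (-\<beta>) * max \<rho>0 \<rho> powr (-\<alpha>))"

lemma exists_dyadic_small:
  fixes \<rho> \<rho>0 :: real
  assumes "0 < \<rho>" "\<rho> < \<rho>0"
  shows "\<exists>k::nat. \<rho>0 / 2^(k+1) \<le> \<rho> \<and> \<rho> < \<rho>0 / 2^k"
proof -
  obtain n :: nat where n: "\<rho>0 / \<rho> < 2^n"
    using real_arch_pow[of 2 "\<rho>0/\<rho>"] by auto
  have ex: "\<exists>n. \<rho>0 / 2^n \<le> \<rho>"
    using n assms by (intro exI[of _ n]) (auto simp: field_simps)
  define m where "m = (LEAST n. \<rho>0 / 2^n \<le> \<rho>)"
  have m1: "\<rho>0 / 2^m \<le> \<rho>" unfolding m_def by (rule LeastI_ex[OF ex])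
  have m0: "m \<noteq> 0" proof assume "m = 0" thus False using m1 assms by simp qed
  then obtain k where k: "m = Suc k" using not0_implies_Suc by blast
  have "\<not> \<rho>0 / 2^k \<le> \<rho>" using not_less_Least[of k "\<lambda>n. \<rho>0 / 2^n \<le> \<rho>"] k m_def by auto
  thus ?thesis using m1 k by (intro exI[of _ k]) auto
qed

lemma exists_dyadic_large:
  fixes \<rho> \<rho>0 :: real
  assumes "0 < \<rho>0" "\<rho>0 \<le> \<rho>"
  shows "\<exists>k::nat. \<rho>0 * 2^k \<le> \<rho> \<and> \<rho> < \<rho>0 * 2^(k+1)"
proof -
  obtain n :: nat where n: "\<rho> / \<rho>0 < 2^n"
    using real_arch_pow[of 2 "\<rho>/\<rho>0"] by auto
  have ex: "\<exists>n. \<rho> < \<rho>0 * 2^n"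
    using n assms by (intro exI[of _ n]) (auto simp: field_simps)
  define m where "m = (LEAST n. \<rho> < \<rho>0 * 2^n)"
  have m1: "\<rho> < \<rho>0 * 2^m" unfolding m_def by (rule LeastI_ex[OF ex])
  have m0: "m \<noteq> 0" proof assume "m = 0" thus False using m1 assms by simp qed
  then obtain k where k: "m = Suc k" using not0_implies_Suc by blast
  have "\<not> \<rho> < \<rho>0 * 2^k" using not_less_Least[of k "\<lambda>n. \<rho> < \<rho>0 * 2^n"] k m_def by auto
  thus ?thesis using m1 k by (intro exI[of _ k]) auto
qed


lemma pow2_powr: "((2::real)^k) powr c = (2 powr c)^k"
proof -
  have "((2::real)^k) powr c = (2 powr real k) powr c" by (simp add: powr_realpow)
  also have "\<dots> = 2 powr (real k * c)" by (rule powr_powr)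
  also have "\<dots> = (2 powr c)^k" by (simp add: powr_power)
  finally show ?thesis .
qed

lemma wt_small:
  assumes "0 < \<rho>" "\<rho> < \<rho>0" "\<rho>0 / 2^(k+1) \<le> \<rho>" "0 \<le> \<beta>"
  shows "wt \<alpha> \<beta> \<rho>0 \<rho> \<le> \<rho>0 powr (-\<alpha>-\<beta>) * 2 powr \<beta> * (2 powr \<beta>)^k"
proof -
  have "wt \<alpha> \<beta> \<rho>0 \<rho> = \<rho> powr (-\<beta>) * \<rho>0 powr (-\<alpha>)"
    using assms by (simp add: wt_def max_def)
  also have "\<dots> \<le> (\<rho>0 / 2^(k+1)) powr (-\<beta>) * \<rho>0 powr (-\<alpha>)"
    apply (rule mult_right_mono)
     apply (rule powr_mono2')
    using assms by auto
  also have "(\<rho>0 / 2^(k+1)) powr (-\<beta>) = \<rho>0 powr (-\<beta>) * (2 powr \<beta>)^(k+1)"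
  proof -
    have "(\<rho>0 / 2^(k+1)) powr (-\<beta>) = \<rho>0 powr (-\<beta>) / (2^(k+1)) powr (-\<beta>)" by (rule powr_divide)
    also have "\<dots> = \<rho>0 powr (-\<beta>) / (2 powr (-\<beta>))^(k+1)" by (simp only: pow2_powr)
    also have "\<dots> = \<rho>0 powr (-\<beta>) * (2 powr \<beta>)^(k+1)" by (simp add: powr_minus power_inverse divide_inverse)
    finally show ?thesis .
  qed
  also have "\<rho>0 powr (-\<beta>) * (2 powr \<beta>)^(k+1) * \<rho>0 powr (-\<alpha>) = (\<rho>0 powr (-\<beta>) * \<rho>0 powr (-\<alpha>)) * 2 powr \<beta> * (2 powr \<beta>)^k"
    by (simp only: power_Suc Suc_eq_plus1[symmetric] mult_ac)
  also have "\<rho>0 powr (-\<beta>) * \<rho>0 powr (-\<alpha>) = \<rho>0 powr (-\<alpha>-\<beta>)"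
    by (simp only: powr_add[symmetric]) (simp add: algebra_simps)
  finally show ?thesis .
qed

lemma wt_large:
  assumes "0 < \<rho>0" "\<rho>0 \<le> \<rho>" "\<rho>0 * 2^k \<le> \<rho>" "0 \<le> \<alpha> + \<beta>"
  shows "wt \<alpha> \<beta> \<rho>0 \<rho> \<le> \<rho>0 powr (-\<alpha>-\<beta>) * (2 powr (-\<alpha>-\<beta>))^k"
proof -
  have "wt \<alpha> \<beta> \<rho>0 \<rho> = \<rho> powr (-\<beta>) * \<rho> powr (-\<alpha>)"
    using assms by (simp add: wt_def max_def)
  also have "\<dots> = \<rho> powr (-\<alpha>-\<beta>)" by (simp only: powr_add[symmetric]) (simp add: algebra_simps)
  also have "\<dots> \<le> (\<rho>0 * 2^k) powr (-\<alpha>-\<beta>)"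
    apply (rule powr_mono2')
    using assms by auto
  also have "\<dots> = \<rho>0 powr (-\<alpha>-\<beta>) * (2 powr (-\<alpha>-\<beta>))^k"
    by (simp only: powr_mult pow2_powr)
  finally show ?thesis .
qed


lemma four_pow: "((2::real)^k)^2 = 4^k"
  by (simp add: power2_eq_square power_mult_distrib[symmetric])
lemma algA:
  fixes \<rho>0 \<alpha> \<beta> K :: real assumes "0 < \<rho>0"
  shows "\<rho>0 powr (-\<alpha>-\<beta>) * 2 powr \<beta> * (2 powr \<beta>)^k * (K * (\<rho>0 / 2^k)^2)
      = K * \<rho>0 powr (2 - \<alpha> - \<beta>) * 2 powr \<beta> * (2 powr (\<beta> - 2))^k"
proof -
  have e1: "\<rho>0 powr (-\<alpha>-\<beta>) * \<rho>0^2 = \<rho>0 powr (2 - \<alpha> - \<beta>)"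
  proof -
    have "\<rho>0^2 = \<rho>0 powr 2" using assms by (simp add: powr_realpow)
    hence "\<rho>0 powr (-\<alpha>-\<beta>) * \<rho>0^2 = \<rho>0 powr (-\<alpha>-\<beta> + 2)" by (simp add: powr_add)
    thus ?thesis by (simp add: algebra_simps)
  qed
  have e2: "(2::real) powr (\<beta> - 2) = 2 powr \<beta> / 4"
    by (simp add: powr_diff)
  have e3: "(2 powr \<beta> / 4)^k = (2 powr \<beta>)^k / (2^k)^2"
    by (simp add: power_divide four_pow)
  show ?thesis unfolding e2 e3 e1[symmetric] by (simp add: power_divide field_simps)
qed
lemma algB:
  fixes \<rho>0 \<alpha> \<beta> K :: real assumes "0 < \<rho>0"
  shows "\<rho>0 powr (-\<alpha>-\<beta>) * (2 powr (-\<alpha>-\<beta>))^k * (K * (\<rho>0 * 2^(k+1))^2)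
      = 4 * K * \<rho>0 powr (2 - \<alpha> - \<beta>) * (2 powr (2 - \<alpha> - \<beta>))^k"
proof -
  have e1: "\<rho>0 powr (-\<alpha>-\<beta>) * \<rho>0^2 = \<rho>0 powr (2 - \<alpha> - \<beta>)"
  proof -
    have "\<rho>0^2 = \<rho>0 powr 2" using assms by (simp add: powr_realpow)
    hence "\<rho>0 powr (-\<alpha>-\<beta>) * \<rho>0^2 = \<rho>0 powr (-\<alpha>-\<beta> + 2)" by (simp add: powr_add)
    thus ?thesis by (simp add: algebra_simps)
  qed
  have e2: "(2::real) powr (2 - \<alpha> - \<beta>) = 2 powr (-\<alpha>-\<beta>) * 4"
  proof -
    have "(2::real) powr (2 - \<alpha> - \<beta>) = 2 powr (-\<alpha>-\<beta> + 2)" by (simp add: algebra_simps)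
    thus ?thesis by (simp add: powr_add)
  qed
  have e3: "(2 powr (-\<alpha>-\<beta>) * 4)^k = (2 powr (-\<alpha>-\<beta>))^k * (2^k)^2"
    by (simp add: power_mult_distrib four_pow)
  show ?thesis unfolding e2 e3 e1[symmetric] by (simp add: power_mult_distrib field_simps)
qed


lemma geom_ennreal:
  fixes c q :: real
  assumes "0 \<le> c" "0 \<le> q" "q < 1"
  shows "(\<Sum>k. ennreal (c * q^k)) = ennreal (c / (1 - q))"
proof -
  have s: "summable (\<lambda>k. c * q^k)" using assms by (intro summable_mult summable_geometric) auto
  have "(\<Sum>k. ennreal (c * q^k)) = ennreal (\<Sum>k. c * q^k)"
    using assms s by (intro suminf_ennreal2) auto
  also have "(\<Sum>k. c * q^k) = c / (1 - q)"
    using assms by (simp add: suminf_mult summable_geometric suminf_geometric)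
  finally show ?thesis .
qed

lemma meas_ball_sum:
  fixes \<mu> :: "('a::metric_space) measure"
  assumes "sets \<mu> = sets borel"
  shows "(\<lambda>\<eta>. \<Sum>k. ennreal (A k) * indicator (ball x (r k)) \<eta>) \<in> borel_measurable \<mu>"
proof -
  have [measurable]: "\<And>k. ball x (r k) \<in> sets borel" by simp
  have "(\<lambda>\<eta>. \<Sum>k. ennreal (A k) * indicator (ball x (r k)) \<eta>) \<in> borel_measurable borel"
    by measurable
  thus ?thesis using measurable_cong_sets[OF assms refl] by blast
qed


lemma single_le_suminf_ennreal: "(f k :: ennreal) \<le> (\<Sum>i. f i)"
  using sum_le_suminf[of f "{k}"] by auto

lemma dyadic_integral:
  fixes \<mu> :: "('a::metric_space) measure" and x :: 'a
  assumes sets: "sets \<mu> = sets borel"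
    and growth: "\<And>r. r > 0 \<Longrightarrow> emeasure \<mu> (ball x r) \<le> ennreal (K * r^2)"
    and K: "0 \<le> K" and \<rho>0: "0 < \<rho>0" and \<beta>: "0 \<le> \<beta>" "\<beta> < 2" and \<alpha>\<beta>: "2 < \<alpha> + \<beta>"
  shows "(\<integral>\<^sup>+\<eta>. ennreal (wt \<alpha> \<beta> \<rho>0 (dist \<eta> x)) \<partial>\<mu>)
     \<le> ennreal (K * (2 powr \<beta> / (1 - 2 powr (\<beta> - 2)) + 4 / (1 - 2 powr (2 - \<alpha> - \<beta>))) * \<rho>0 powr (2 - \<alpha> - \<beta>))"
proof -
  define A where "A k = \<rho>0 powr (-\<alpha>-\<beta>) * 2 powr \<beta> * (2 powr \<beta>)^k" for k :: nat
  define r where "r k = \<rho>0 / 2^k" for k :: nat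
  define B where "B k = \<rho>0 powr (-\<alpha>-\<beta>) * (2 powr (-\<alpha>-\<beta>))^k" for k :: nat
  define s where "s k = \<rho>0 * 2^(k+1)" for k :: nat
  define F1 where "F1 \<eta> = (\<Sum>k. ennreal (A k) * indicator (ball x (r k)) \<eta>)" for \<eta>
  define F2 where "F2 \<eta> = (\<Sum>k. ennreal (B k) * indicator (ball x (s k)) \<eta>)" for \<eta>
  define P where "P = \<rho>0 powr (2 - \<alpha> - \<beta>)"
  have P: "P \<ge> 0" by (simp add: P_def)
  have pw: "ennreal (wt \<alpha> \<beta> \<rho>0 (dist \<eta> x)) \<le> F1 \<eta> + F2 \<eta>" for \<eta>
  proof -
    define \<rho> where "\<rho> = dist \<eta> x"
    consider "\<rho> = 0" | "0 < \<rho>" "\<rho> < \<rho>0" | "\<rho>0 \<le> \<rho>" using \<rho>0 by (force simp: \<rho>_def)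
    then show ?thesis
    proof cases
      case 1 thus ?thesis by (simp add: \<rho>_def wt_def)
    next
      case 2
      then obtain k where k: "\<rho>0 / 2^(k+1) \<le> \<rho>" "\<rho> < \<rho>0 / 2^k" using exists_dyadic_small by blast
      have "wt \<alpha> \<beta> \<rho>0 \<rho> \<le> A k" unfolding A_def using wt_small[OF 2 k(1) \<beta>(1)] .
      moreover have "\<eta> \<in> ball x (r k)" using k(2) unfolding r_def \<rho>_def by (simp add: dist_commute)
      ultimately have "ennreal (wt \<alpha> \<beta> \<rho>0 \<rho>) \<le> ennreal (A k) * indicator (ball x (r k)) \<eta>"
        by (simp only: indicator_simps mult_1_right ennreal_leI)
      also have "\<dots> \<le> F1 \<eta>" unfolding F1_def by (rule single_le_suminf_ennreal)
      also have "\<dots> \<le> F1 \<eta> + F2 \<eta>" by simp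
      finally show ?thesis by (simp only: \<rho>_def)
    next
      case 3
      then obtain k where k: "\<rho>0 * 2^k \<le> \<rho>" "\<rho> < \<rho>0 * 2^(k+1)" using exists_dyadic_large \<rho>0 by blast
      have "wt \<alpha> \<beta> \<rho>0 \<rho> \<le> B k" unfolding B_def by (rule wt_large[OF \<rho>0 3 k(1)]) (use \<alpha>\<beta> in linarith)
      moreover have "\<eta> \<in> ball x (s k)" using k(2) unfolding s_def \<rho>_def by (simp add: dist_commute)
      ultimately have "ennreal (wt \<alpha> \<beta> \<rho>0 \<rho>) \<le> ennreal (B k) * indicator (ball x (s k)) \<eta>"
        by (simp only: indicator_simps mult_1_right ennreal_leI)
      also have "\<dots> \<le> F2 \<eta>" unfolding F2_def by (rule single_le_suminf_ennreal)
      also have "\<dots> \<le> F1 \<eta> + F2 \<eta>" by simp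
      finally show ?thesis by (simp only: \<rho>_def)
    qed
  qed
  have ballS[measurable]: "ball x t \<in> sets \<mu>" for t using sets by simp
  have "(\<integral>\<^sup>+\<eta>. ennreal (wt \<alpha> \<beta> \<rho>0 (dist \<eta> x)) \<partial>\<mu>) \<le> (\<integral>\<^sup>+\<eta>. F1 \<eta> + F2 \<eta> \<partial>\<mu>)"
    by (intro nn_integral_mono pw)
  also have "\<dots> = integral\<^sup>N \<mu> F1 + integral\<^sup>N \<mu> F2"
    unfolding F1_def F2_def by (intro nn_integral_add meas_ball_sum sets)
  also have "integral\<^sup>N \<mu> F1 = (\<Sum>k. ennreal (A k) * emeasure \<mu> (ball x (r k)))"
    unfolding F1_def
    by (subst nn_integral_suminf, measurable) (auto simp: nn_integral_cmult_indicator ballS)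
  also have "\<dots> \<le> (\<Sum>k. ennreal (K * P * 2 powr \<beta> * (2 powr (\<beta> - 2))^k))"
  proof (intro suminf_le summableI)
    fix k
    have rk: "r k > 0" using \<rho>0 by (simp add: r_def)
    have "ennreal (A k) * emeasure \<mu> (ball x (r k)) \<le> ennreal (A k) * ennreal (K * (r k)^2)"
      by (intro mult_left_mono growth rk) auto
    also have "\<dots> = ennreal (A k * (K * (r k)^2))"
      using K by (intro ennreal_mult''[symmetric]) simp
    also have "A k * (K * (r k)^2) = K * P * 2 powr \<beta> * (2 powr (\<beta> - 2))^k"
      unfolding A_def r_def P_def by (rule algA[OF \<rho>0])
    finally show "ennreal (A k) * emeasure \<mu> (ball x (r k)) \<le> ennreal (K * P * 2 powr \<beta> * (2 powr (\<beta> - 2))^k)" .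
  qed
  also have "\<dots> = ennreal (K * P * 2 powr \<beta> / (1 - 2 powr (\<beta> - 2)))"
  proof -
    have "2 powr (\<beta> - 2) < 2 powr 0" using \<beta> by (intro powr_less_mono) auto
    thus ?thesis using K P by (subst geom_ennreal) auto
  qed
  also have "integral\<^sup>N \<mu> F2 = (\<Sum>k. ennreal (B k) * emeasure \<mu> (ball x (s k)))"
    unfolding F2_def
    by (subst nn_integral_suminf, measurable) (auto simp: nn_integral_cmult_indicator ballS)
  also have "\<dots> \<le> (\<Sum>k. ennreal (4 * K * P * (2 powr (2 - \<alpha> - \<beta>))^k))"
  proof (intro suminf_le summableI)
    fix k
    have sk: "s k > 0" using \<rho>0 by (simp add: s_def)
    have "ennreal (B k) * emeasure \<mu> (ball x (s k)) \<le> ennreal (B k) * ennreal (K * (s k)^2)"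
      by (intro mult_left_mono growth sk) auto
    also have "\<dots> = ennreal (B k * (K * (s k)^2))"
      using K by (intro ennreal_mult''[symmetric]) simp
    also have "B k * (K * (s k)^2) = 4 * K * P * (2 powr (2 - \<alpha> - \<beta>))^k"
      unfolding B_def s_def P_def by (rule algB[OF \<rho>0])
    finally show "ennreal (B k) * emeasure \<mu> (ball x (s k)) \<le> ennreal (4 * K * P * (2 powr (2 - \<alpha> - \<beta>))^k)" .
  qed
  also have "\<dots> = ennreal (4 * K * P / (1 - 2 powr (2 - \<alpha> - \<beta>)))"
  proof -
    have "2 powr (2 - \<alpha> - \<beta>) < 2 powr 0" using \<alpha>\<beta> by (intro powr_less_mono) auto
    thus ?thesis using K P by (subst geom_ennreal) auto
  qed
  also have "ennreal (K * P * 2 powr \<beta> / (1 - 2 powr (\<beta> - 2))) + ennreal (4 * K * P / (1 - 2 powr (2 - \<alpha> - \<beta>)))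
     = ennreal (K * (2 powr \<beta> / (1 - 2 powr (\<beta> - 2)) + 4 / (1 - 2 powr (2 - \<alpha> - \<beta>))) * P)"
  proof -
    have "2 powr (\<beta> - 2) < 2 powr 0" using \<beta> by (intro powr_less_mono) auto
    moreover have "2 powr (2 - \<alpha> - \<beta>) < 2 powr 0" using \<alpha>\<beta> by (intro powr_less_mono) auto
    ultimately show ?thesis using K P
      by (subst ennreal_plus[symmetric]) (auto simp: field_simps)
  qed
  finally show ?thesis unfolding P_def by (simp add: add_mono)
qed


lemma pointwise_bound:
  fixes \<xi> \<eta> :: "'a::real_normed_vector"
  assumes "\<xi> \<noteq> 0" "0 < a" "0 < b"
  shows "1 / (norm (\<xi> - \<eta>) powr a * norm \<eta> powr b)
     \<le> wt a b (norm \<xi> / 2) (dist \<eta> 0) + wt b a (norm \<xi> / 2) (dist \<eta> \<xi>)"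
proof -
  define x where "x = norm (\<xi> - \<eta>)"
  define y where "y = norm \<eta>"
  define \<rho>0 where "\<rho>0 = norm \<xi> / 2"
  have d1: "dist \<eta> 0 = y" by (simp add: y_def)
  have d2: "dist \<eta> \<xi> = x" by (simp add: x_def dist_norm norm_minus_commute)
  have tri: "2 * \<rho>0 \<le> x + y" unfolding \<rho>0_def x_def y_def using norm_triangle_ineq[of "\<xi> - \<eta>" \<eta>] by simp
  have w1: "0 \<le> wt a b \<rho>0 y" "0 \<le> wt b a \<rho>0 x" by (auto simp: wt_def)
  show ?thesis
  proof (cases "x = 0 \<or> y = 0")
    case True
    hence "1 / (x powr a * y powr b) = 0" by auto
    thus ?thesis using w1 unfolding d1 d2 \<rho>0_def x_def y_def by linarith
  next
    case False
    hence xp: "x > 0" and yp: "y > 0" by (auto simp: x_def y_def)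
    show ?thesis
    proof (cases "y \<le> x")
      case True
      have m: "max \<rho>0 y \<le> x" using tri True by auto
      have mp: "max \<rho>0 y > 0" using yp by auto
      have "1 / (x powr a * y powr b) \<le> 1 / (max \<rho>0 y powr a * y powr b)"
        apply (rule divide_left_mono)
        using m mp yp assms by (auto intro!: mult_right_mono powr_mono2 mult_pos_pos)
      also have "\<dots> = wt a b \<rho>0 y" using yp by (simp add: wt_def powr_minus divide_inverse mult.commute)
      finally show ?thesis using w1 unfolding d1 d2 \<rho>0_def x_def y_def by linarith
    next
      case False
      have m: "max \<rho>0 x \<le> y" using tri False by auto
      have mp: "max \<rho>0 x > 0" using xp by auto
      have "1 / (x powr a * y powr b) \<le> 1 / (x powr a * max \<rho>0 x powr b)"
        apply (rule divide_left_mono)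
        using m mp xp assms by (auto intro!: mult_left_mono powr_mono2 mult_pos_pos)
      also have "\<dots> = wt b a \<rho>0 x" using xp by (simp add: wt_def powr_minus divide_inverse mult.commute)
      finally show ?thesis using w1 unfolding d1 d2 \<rho>0_def x_def y_def by linarith
    qed
  qed
qed

lemma main_from_growth:
  fixes S :: "(real^3) measure" and a b Kc :: real
  assumes ab: "0 < a" "a < 2" "0 < b" "b < 2" "a + b > 2"
    and sets: "sets S = sets borel" and Kc: "0 \<le> Kc"
    and growth: "\<And>x r. r > 0 \<Longrightarrow> emeasure S (ball x r) \<le> ennreal (Kc * r^2)"
    and \<xi>: "\<xi> \<noteq> 0"
  shows "(\<integral>\<^sup>+ \<eta>. ennreal (1 / (norm (\<xi> - \<eta>) powr a * norm \<eta> powr b)) \<partial>S)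
      \<le> ennreal ((Kc * (2 powr b / (1 - 2 powr (b - 2)) + 4 / (1 - 2 powr (2 - a - b)))
           + Kc * (2 powr a / (1 - 2 powr (a - 2)) + 4 / (1 - 2 powr (2 - b - a)))) * 2 powr (a + b - 2)
          / norm \<xi> powr (a + b - 2))"
proof -
  define \<rho>0 where "\<rho>0 = norm \<xi> / 2"
  have \<rho>0: "0 < \<rho>0" using \<xi> by (simp add: \<rho>0_def)
  define D1 where "D1 = Kc * (2 powr b / (1 - 2 powr (b - 2)) + 4 / (1 - 2 powr (2 - a - b)))"
  define D2 where "D2 = Kc * (2 powr a / (1 - 2 powr (a - 2)) + 4 / (1 - 2 powr (2 - b - a)))"
  have "2 powr (b - 2) < 2 powr 0" "2 powr (a - 2) < 2 powr 0" "2 powr (2 - a - b) < 2 powr 0" "2 powr (2 - b - a) < 2 powr 0"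
    using ab by (intro powr_less_mono; simp)+
  hence D: "0 \<le> D1" "0 \<le> D2" using Kc unfolding D1_def D2_def by (auto intro!: mult_nonneg_nonneg add_nonneg_nonneg divide_nonneg_pos)
  have "(\<integral>\<^sup>+ \<eta>. ennreal (1 / (norm (\<xi> - \<eta>) powr a * norm \<eta> powr b)) \<partial>S)
     \<le> (\<integral>\<^sup>+ \<eta>. ennreal (wt a b \<rho>0 (dist \<eta> 0)) + ennreal (wt b a \<rho>0 (dist \<eta> \<xi>)) \<partial>S)"
    apply (rule nn_integral_mono)
    apply (subst ennreal_plus[symmetric])
      apply (simp add: wt_def)
     apply (simp add: wt_def)
    apply (rule ennreal_leI)
    unfolding \<rho>0_def by (rule pointwise_bound[OF \<xi> ab(1) ab(3)])
  also have "\<dots> = (\<integral>\<^sup>+ \<eta>. ennreal (wt a b \<rho>0 (dist \<eta> 0)) \<partial>S) + (\<integral>\<^sup>+ \<eta>. ennreal (wt b a \<rho>0 (dist \<eta> \<xi>)) \<partial>S)"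
  proof (rule nn_integral_add)
    have "(\<lambda>\<eta>. ennreal (wt a b \<rho>0 (dist \<eta> (0::real^3)))) \<in> borel_measurable borel"
      unfolding wt_def by measurable
    thus "(\<lambda>\<eta>. ennreal (wt a b \<rho>0 (dist \<eta> (0::real^3)))) \<in> borel_measurable S"
      using measurable_cong_sets[OF sets refl] by blast
    have "(\<lambda>\<eta>. ennreal (wt b a \<rho>0 (dist \<eta> \<xi>))) \<in> borel_measurable borel"
      unfolding wt_def by measurable
    thus "(\<lambda>\<eta>. ennreal (wt b a \<rho>0 (dist \<eta> \<xi>))) \<in> borel_measurable S"
      using measurable_cong_sets[OF sets refl] by blast
  qed
  also have "\<dots> \<le> ennreal (D1 * \<rho>0 powr (2 - a - b)) + ennreal (D2 * \<rho>0 powr (2 - b - a))"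
    unfolding D1_def D2_def
    by (intro add_mono dyadic_integral[OF sets growth Kc \<rho>0]) (use ab in auto)
  also have "\<dots> = ennreal ((D1 + D2) * \<rho>0 powr (2 - a - b))"
    using D by (subst ennreal_plus[symmetric]) (auto simp: algebra_simps)
  also have "\<rho>0 powr (2 - a - b) = 2 powr (a + b - 2) / norm \<xi> powr (a + b - 2)"
  proof -
    have e: "2 - a - b = - (a + b - 2)" by simp
    have "\<rho>0 powr (2 - a - b) = 1 / \<rho>0 powr (a + b - 2)" by (simp only: e powr_minus divide_inverse mult_1_left)
    also have "\<rho>0 powr (a + b - 2) = norm \<xi> powr (a + b - 2) / 2 powr (a + b - 2)"
      unfolding \<rho>0_def by (rule powr_divide)
    finally show ?thesis by simp
  qed
  finally show ?thesis unfolding D1_def D2_def by (simp add: mult.assoc times_divide_eq_right)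
qed


lemma plane_growth:
  fixes p u v x :: "real^3"
  assumes uu: "u \<bullet> u = 1" and vv: "v \<bullet> v = 1" and uv: "u \<bullet> v = 0" and r: "0 < r"
  shows "emeasure (plane_measure p u v) (ball x r) \<le> ennreal (4 * r^2)"
proof -
  define f where "f = (\<lambda>(s::real, t::real). p + s *\<^sub>R u + t *\<^sub>R v)"
  have fm: "f \<in> borel_measurable (lborel :: (real \<times> real) measure)"
  proof -
    have "continuous_on UNIV f" unfolding f_def case_prod_beta by (intro continuous_intros)
    hence "f \<in> borel_measurable borel" by (rule borel_measurable_continuous_onI)
    thus ?thesis using measurable_cong_sets[OF sets_lborel refl] by blast
  qed
  define s0 where "s0 = (x - p) \<bullet> u"
  define t0 where "t0 = (x - p) \<bullet> v"
  have nu: "norm u = 1" using uu by (simp add: norm_eq_sqrt_inner)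
  have nv: "norm v = 1" using vv by (simp add: norm_eq_sqrt_inner)
  have sub: "f -` ball x r \<inter> space lborel \<subseteq> {s0 - r .. s0 + r} \<times> {t0 - r .. t0 + r}"
  proof (rule subsetI)
    fix z assume z: "z \<in> f -` ball x r \<inter> space lborel"
    obtain s t where zst: "z = (s, t)" by (cases z)
    from z have d: "norm (f (s, t) - x) < r" unfolding zst by (simp add: dist_norm norm_minus_commute)
    have e1: "(f (s, t) - x) \<bullet> u = s - s0"
      unfolding f_def s0_def using uu uv by (simp add: inner_diff_left inner_add_left inner_commute algebra_simps)
    have e2: "(f (s, t) - x) \<bullet> v = t - t0"
      unfolding f_def t0_def using vv uv by (simp add: inner_diff_left inner_add_left inner_commute algebra_simps)
    have "\<bar>s - s0\<bar> \<le> norm (f (s, t) - x) * norm u" unfolding e1[symmetric] by (rule Cauchy_Schwarz_ineq2)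
    hence h1: "\<bar>s - s0\<bar> < r" using d nu by simp
    have "\<bar>t - t0\<bar> \<le> norm (f (s, t) - x) * norm v" unfolding e2[symmetric] by (rule Cauchy_Schwarz_ineq2)
    hence h2: "\<bar>t - t0\<bar> < r" using d nv by simp
    show "z \<in> {s0 - r .. s0 + r} \<times> {t0 - r .. t0 + r}" using h1 h2 zst by auto
  qed
  have "emeasure (plane_measure p u v) (ball x r) = emeasure lborel (f -` ball x r \<inter> space lborel)"
    unfolding plane_measure_def f_def[symmetric] by (rule emeasure_distr[OF fm]) simp
  also have "\<dots> \<le> emeasure lborel ({s0 - r .. s0 + r} \<times> {t0 - r .. t0 + r})"
    by (rule emeasure_mono[OF sub]) (simp add: borel_closed closed_Times)
  also have "\<dots> = emeasure (lborel \<Otimes>\<^sub>M lborel) ({s0 - r .. s0 + r} \<times> {t0 - r .. t0 + r})"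
    by (simp add: lborel_prod)
  also have "\<dots> = emeasure lborel {s0 - r .. s0 + r} * emeasure lborel {t0 - r .. t0 + r}"
    by (rule lborel.emeasure_pair_measure_Times) auto
  also have "\<dots> = ennreal (4 * r^2)"
    using r by (simp add: ennreal_mult'[symmetric] power2_eq_square)
  finally show ?thesis by simp
qed


lemma sin_lower_half:
  fixes y :: real assumes "0 \<le> y" "y \<le> pi/2"
  shows "y / 2 \<le> sin y"
proof (cases "y \<le> pi/3")
  case True
  show ?thesis
  proof (cases "y = 0")
    case True thus ?thesis by simp
  next
    case False
    hence yp: "0 < y" using assms by simp
    obtain z where z: "0 < z" "z < y" "sin y - sin 0 = (y - 0) * cos z"
      using MVT2[OF yp, of sin cos] by (auto intro: DERIV_sin)
    have "cos (pi/3) \<le> cos z" using z True by (intro cos_monotone_0_pi_le) auto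
    hence "1/2 \<le> cos z" by (simp add: cos_60)
    hence "y * (1/2) \<le> y * cos z" using yp by (intro mult_left_mono) auto
    thus ?thesis using z by simp
  qed
next
  case False
  have "sin (pi/3) \<le> sin y" using False assms by (intro sin_monotone_2pi_le) auto
  hence s: "sqrt 3 / 2 \<le> sin y" by (simp add: sin_60)
  have "(17/10::real)^2 \<le> 3" by (simp add: power2_eq_square)
  hence "17/10 \<le> sqrt 3" by (rule real_le_rsqrt)
  moreover have "pi < 16/5" using pi_approx by simp
  ultimately show ?thesis using s assms by linarith
qed

lemma abs_sin_lower_half:
  fixes y :: real assumes "\<bar>y\<bar> \<le> pi/2"
  shows "\<bar>y\<bar> / 2 \<le> \<bar>sin y\<bar>"
proof (cases "0 \<le> y")
  case True thus ?thesis using sin_lower_half[of y] assms sin_ge_zero[of y] by auto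
next
  case False
  hence "-y / 2 \<le> sin (-y)" using sin_lower_half[of "-y"] assms by auto
  thus ?thesis using False by auto
qed

lemma abs_sin_shift_int: "\<bar>sin (y + of_int k * pi)\<bar> = \<bar>sin y\<bar>"
proof -
  have "sin (y + of_int k * pi) = sin y * cos (pi * of_int k) + cos y * sin (pi * of_int k)"
    by (simp add: sin_add mult.commute)
  thus ?thesis by (simp add: abs_mult)
qed

lemma sin_small_set_measure:
  fixes \<epsilon> \<psi>0 \<alpha> :: real assumes "0 < \<epsilon>"
  shows "emeasure lborel {x \<in> {\<alpha>..\<alpha> + 2*pi}. \<bar>sin (x - \<psi>0)\<bar> < \<epsilon>} \<le> ennreal (12 * \<epsilon>)"
proof -
  define m where "m = \<lfloor>(\<alpha> - \<psi>0) / pi + 1/2\<rfloor>"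
  define I where "I j = {\<psi>0 + of_int (m + j) * pi - 2*\<epsilon> .. \<psi>0 + of_int (m + j) * pi + 2*\<epsilon>}" for j :: int
  have sub: "{x \<in> {\<alpha>..\<alpha> + 2*pi}. \<bar>sin (x - \<psi>0)\<bar> < \<epsilon>} \<subseteq> I 0 \<union> I 1 \<union> I 2"
  proof
    fix x assume x: "x \<in> {x \<in> {\<alpha>..\<alpha> + 2*pi}. \<bar>sin (x - \<psi>0)\<bar> < \<epsilon>}"
    define k where "k = \<lfloor>(x - \<psi>0) / pi + 1/2\<rfloor>"
    define y where "y = x - \<psi>0 - of_int k * pi"
    have k1: "of_int k \<le> (x - \<psi>0) / pi + 1/2" "(x - \<psi>0) / pi + 1/2 < of_int k + 1"
      unfolding k_def by linarith+
    have "of_int k * pi \<le> x - \<psi>0 + pi/2" "x - \<psi>0 + pi/2 < of_int k * pi + pi"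
      using k1 pi_gt_zero by (simp_all add: field_simps)
    hence "- (pi/2) \<le> y" "y \<le> pi/2" unfolding y_def by linarith+
    hence yb: "\<bar>y\<bar> \<le> pi/2" by linarith
    have "\<bar>sin (x - \<psi>0)\<bar> = \<bar>sin y\<bar>"
      using abs_sin_shift_int[of y k] unfolding y_def by simp
    hence "\<bar>y\<bar> < 2 * \<epsilon>" using abs_sin_lower_half[OF yb] x by auto
    moreover have "m \<le> k" unfolding m_def k_def using x pi_gt_zero
      by (intro floor_mono) (auto simp: divide_right_mono)
    moreover have "k \<le> m + 2"
    proof -
      have "(x - \<psi>0) / pi \<le> (\<alpha> - \<psi>0 + 2*pi) / pi"
        using x pi_gt_zero by (intro divide_right_mono) auto
      also have "\<dots> = (\<alpha> - \<psi>0) / pi + 2" by (simp add: add_divide_distrib)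
      finally have "(x - \<psi>0) / pi + 1/2 \<le> ((\<alpha> - \<psi>0) / pi + 1/2) + 2" by simp
      hence "k \<le> \<lfloor>((\<alpha> - \<psi>0) / pi + 1/2) + 2\<rfloor>" unfolding k_def by (rule floor_mono)
      moreover have "\<lfloor>((\<alpha> - \<psi>0) / pi + 1/2) + 2\<rfloor> = m + 2"
        unfolding m_def by (metis floor_add_int of_int_numeral)
      ultimately show ?thesis by linarith
    qed
    ultimately have "k = m \<or> k = m + 1 \<or> k = m + 2" by linarith
    moreover have "x \<in> I (k - m)"
      using \<open>\<bar>y\<bar> < 2 * \<epsilon>\<close> unfolding I_def y_def by auto
    ultimately show "x \<in> I 0 \<union> I 1 \<union> I 2" by auto
  qed
  have mI: "emeasure lborel (I j) = ennreal (4 * \<epsilon>)" for j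
    unfolding I_def using assms by simp
  have "emeasure lborel {x \<in> {\<alpha>..\<alpha> + 2*pi}. \<bar>sin (x - \<psi>0)\<bar> < \<epsilon>} \<le> emeasure lborel (I 0 \<union> I 1 \<union> I 2)"
    by (rule emeasure_mono[OF sub]) (simp add: I_def)
  also have "\<dots> \<le> emeasure lborel (I 0 \<union> I 1) + emeasure lborel (I 2)"
    by (rule emeasure_subadditive) (auto simp: I_def)
  also have "\<dots> \<le> emeasure lborel (I 0) + emeasure lborel (I 1) + emeasure lborel (I 2)"
    by (intro add_mono emeasure_subadditive) (auto simp: I_def)
  also have "\<dots> = ennreal (12 * \<epsilon>)"
    unfolding mI using assms by (simp add: ennreal_plus[symmetric] del: ennreal_plus)
  finally show ?thesis .
qed


lemma polar_exists: "\<exists>m t. (0::real) \<le> m \<and> a = m * cos t \<and> b = m * sin t"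
proof -
  let ?z = "Complex a b"
  have "rcis (cmod ?z) (Arg ?z) = ?z" by (rule rcis_cmod_Arg)
  hence "a = cmod ?z * cos (Arg ?z)" "b = cmod ?z * sin (Arg ?z)"
    by (metis Re_rcis complex.sel(1), metis Im_rcis complex.sel(2))
  thus ?thesis by (intro exI[of _ "cmod ?z"] exI[of _ "Arg ?z"]) auto
qed

lemma dist_sphere_sq:
  fixes c x :: "real^3"
  shows "(dist (c + r *\<^sub>R vector [sin \<theta> * cos \<phi>, sin \<theta> * sin \<phi>, cos \<theta>]) x)^2
     = (r * sin \<theta> * cos \<phi> - (x - c)$1)^2 + (r * sin \<theta> * sin \<phi> - (x - c)$2)^2 + (r * cos \<theta> - (x - c)$3)^2"
proof -
  have "(dist (c + r *\<^sub>R vector [sin \<theta> * cos \<phi>, sin \<theta> * sin \<phi>, cos \<theta>]) x)^2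
      = (c + r *\<^sub>R vector [sin \<theta> * cos \<phi>, sin \<theta> * sin \<phi>, cos \<theta>] - x) \<bullet> (c + r *\<^sub>R vector [sin \<theta> * cos \<phi>, sin \<theta> * sin \<phi>, cos \<theta>] - x)"
    by (simp only: dist_norm power2_norm_eq_inner)
  also have "\<dots> = (r * sin \<theta> * cos \<phi> - (x - c)$1)^2 + (r * sin \<theta> * sin \<phi> - (x - c)$2)^2 + (r * cos \<theta> - (x - c)$3)^2"
    by (simp add: inner_vec_def sum_3 power2_eq_square algebra_simps)
  finally show ?thesis .
qed

lemma cs2: "((a::real) * u + b * v)^2 \<le> a^2 + b^2" if "u^2 + v^2 = 1"
proof -
  have "(a * u + b * v)^2 + (a * v - b * u)^2 = (a^2 + b^2) * (u^2 + v^2)"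
    by (simp add: power2_eq_square algebra_simps)
  hence "(a * u + b * v)^2 + (a * v - b * u)^2 = a^2 + b^2" using that by simp
  thus ?thesis using zero_le_power2[of "a * v - b * u"] by linarith
qed

lemma horiz_bound_sin:
  fixes s m \<phi> \<phi>0 :: real
  shows "(s * sin (\<phi> - \<phi>0))^2 \<le> (s * cos \<phi> - m * cos \<phi>0)^2 + (s * sin \<phi> - m * sin \<phi>0)^2"
proof -
  have "(s * cos \<phi> - m * cos \<phi>0) * (- sin \<phi>0) + (s * sin \<phi> - m * sin \<phi>0) * cos \<phi>0 = s * sin (\<phi> - \<phi>0)"
    by (simp add: sin_diff algebra_simps)
  moreover have "(- sin \<phi>0)^2 + (cos \<phi>0)^2 = 1" by simp
  ultimately show ?thesis using cs2 by metis
qed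

lemma expand4: "((s::real) * a - m * b)^2 + (s * c - m * d)^2 = s^2 * (c^2 + a^2) + m^2 * (d^2 + b^2) - 2 * (s * m * (a * b + c * d))"
  by (simp add: power2_eq_square algebra_simps)

lemma horiz_bound_abs:
  fixes s m \<phi> \<phi>0 :: real
  assumes "0 \<le> s" "0 \<le> m"
  shows "(s - m)^2 \<le> (s * cos \<phi> - m * cos \<phi>0)^2 + (s * sin \<phi> - m * sin \<phi>0)^2"
proof -
  have "cos \<phi> * cos \<phi>0 + sin \<phi> * sin \<phi>0 \<le> 1"
    using cos_diff[of \<phi> \<phi>0] cos_le_one[of "\<phi> - \<phi>0"] by simp
  hence "s * m * (cos \<phi> * cos \<phi>0 + sin \<phi> * sin \<phi>0) \<le> s * m"
    using assms by (simp add: mult_left_le)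
  moreover have "(s * cos \<phi> - m * cos \<phi>0)^2 + (s * sin \<phi> - m * sin \<phi>0)^2
     = s^2 * ((sin \<phi>)^2 + (cos \<phi>)^2) + m^2 * ((sin \<phi>0)^2 + (cos \<phi>0)^2) - 2 * (s * m * (cos \<phi> * cos \<phi>0 + sin \<phi> * sin \<phi>0))"
    using expand4[of s "cos \<phi>" m "cos \<phi>0" "sin \<phi>" "sin \<phi>0"] .
  moreover have "(s - m)^2 = s^2 + m^2 - 2 * (s * m)" by (simp add: power2_eq_square algebra_simps)
  ultimately show ?thesis by (simp only: sin_cos_squared_add mult_1_right)
qed


lemma sq_less_abs: "(a::real)^2 < b^2 \<Longrightarrow> 0 \<le> b \<Longrightarrow> \<bar>a\<bar> < b"
  by (metis abs_ge_zero power2_abs power_less_imp_less_base)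

lemma sphere_geom:
  fixes c x :: "real^3" and r \<rho> :: real
  assumes r: "0 < r" and \<rho>: "0 < \<rho>"
  obtains \<phi>0 \<theta>0 where
    "\<And>\<theta> \<phi>. 0 < sin \<theta> \<Longrightarrow> dist (c + r *\<^sub>R vector [sin \<theta> * cos \<phi>, sin \<theta> * sin \<phi>, cos \<theta>]) x < \<rho> \<Longrightarrow>
        \<bar>sin (\<phi> - \<phi>0)\<bar> < \<rho> / (r * sin \<theta>) \<and> \<bar>sin (\<theta> - \<theta>0)\<bar> < \<rho> / r"
proof -
  define y where "y = x - c"
  obtain m \<phi>0 where m: "0 \<le> m" "y$1 = m * cos \<phi>0" "y$2 = m * sin \<phi>0"
    using polar_exists by blast
  obtain n \<theta>0 where n: "0 \<le> n" "y$3 = n * cos \<theta>0" "m = n * sin \<theta>0"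
    using polar_exists by blast
  have main: "\<bar>sin (\<phi> - \<phi>0)\<bar> < \<rho> / (r * sin \<theta>) \<and> \<bar>sin (\<theta> - \<theta>0)\<bar> < \<rho> / r"
    if st: "0 < sin \<theta>" and d: "dist (c + r *\<^sub>R vector [sin \<theta> * cos \<phi>, sin \<theta> * sin \<phi>, cos \<theta>]) x < \<rho>" for \<theta> \<phi>
  proof -
    define s where "s = r * sin \<theta>"
    have s: "0 < s" using st r by (simp add: s_def)
    define H where "H = (s * cos \<phi> - m * cos \<phi>0)^2 + (s * sin \<phi> - m * sin \<phi>0)^2"
    define V where "V = (r * cos \<theta> - n * cos \<theta>0)^2"
    have dd: "(dist (c + r *\<^sub>R vector [sin \<theta> * cos \<phi>, sin \<theta> * sin \<phi>, cos \<theta>]) x)^2 = H + V"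
      unfolding dist_sphere_sq H_def V_def s_def y_def[symmetric] m n by (simp add: algebra_simps)
    have dl: "(dist (c + r *\<^sub>R vector [sin \<theta> * cos \<phi>, sin \<theta> * sin \<phi>, cos \<theta>]) x)^2 < \<rho>^2"
      using d by (simp add: power_strict_mono)
    have V0: "0 \<le> V" by (simp add: V_def)
    have "(s * sin (\<phi> - \<phi>0))^2 \<le> H" unfolding H_def by (rule horiz_bound_sin)
    hence "(s * sin (\<phi> - \<phi>0))^2 < \<rho>^2" using dd dl V0 by linarith
    hence "\<bar>s * sin (\<phi> - \<phi>0)\<bar> < \<rho>" using \<rho> by (intro sq_less_abs) auto
    hence a1: "\<bar>sin (\<phi> - \<phi>0)\<bar> < \<rho> / s" using s by (simp add: abs_mult field_simps)
    have "(s - m)^2 \<le> H" unfolding H_def using s m by (intro horiz_bound_abs) auto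
    moreover have "(r * sin (\<theta> - \<theta>0))^2 \<le> (r * cos \<theta> - n * cos \<theta>0)^2 + (r * sin \<theta> - n * sin \<theta>0)^2"
      by (rule horiz_bound_sin)
    ultimately have "(r * sin (\<theta> - \<theta>0))^2 < \<rho>^2" using dd dl unfolding V_def s_def n(3) by linarith
    hence "\<bar>r * sin (\<theta> - \<theta>0)\<bar> < \<rho>" using \<rho> by (intro sq_less_abs) auto
    hence a2: "\<bar>sin (\<theta> - \<theta>0)\<bar> < \<rho> / r" using r by (simp add: abs_mult field_simps)
    show ?thesis using a1 a2 by (simp add: s_def)
  qed
  show ?thesis by (rule that) (rule main)
qed


lemma vector3_axis: "(vector [a, b, c] :: real^3) = a *\<^sub>R axis 1 1 + b *\<^sub>R axis 2 1 + c *\<^sub>R axis 3 1"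
  by (simp add: vec_eq_iff axis_def) (metis exhaust_3 num1_eq1 one_neq_zero)

lemma sin_set_sets: "{t \<in> {\<alpha>..\<alpha> + 2*pi}. \<bar>sin (t - t0)\<bar> < (e::real)} \<in> sets lborel"
proof -
  have "{t \<in> {\<alpha>..\<alpha> + 2*pi}. \<bar>sin (t - t0)\<bar> < e} = {\<alpha>..\<alpha> + 2*pi} \<inter> {t. \<bar>sin (t - t0)\<bar> < e}" by auto
  moreover have "open {t. \<bar>sin (t - t0)\<bar> < e}"
    by (intro open_Collect_less continuous_intros)
  ultimately show ?thesis by (auto intro!: sets.Int borel_closed borel_open)
qed

lemma sphere_growth:
  fixes c x :: "real^3" and r \<rho> :: real
  assumes r: "0 < r" and \<rho>: "0 < \<rho>"
  shows "emeasure (sphere_measure c r) (ball x \<rho>) \<le> ennreal (144 * \<rho>^2)"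
proof -
  define B where "B = ({0<..<pi} \<times> {0<..<2*pi} :: (real \<times> real) set)"
  define g where "g = (\<lambda>(\<theta>::real, \<phi>::real). ennreal (indicator B (\<theta>, \<phi>) * r\<^sup>2 * sin \<theta>))"
  define F where "F = (\<lambda>(\<theta>::real, \<phi>::real). c + r *\<^sub>R vector [sin \<theta> * cos \<phi>, sin \<theta> * sin \<phi>, cos \<theta>] :: real^3)"
  have Fc: "continuous_on UNIV F"
    unfolding F_def case_prod_beta vector3_axis by (intro continuous_intros)
  have Fb: "F \<in> borel_measurable borel" by (rule borel_measurable_continuous_onI[OF Fc])
  have Fm: "F \<in> measurable (density lborel g) borel"
    using Fb measurable_cong_sets[of "density lborel g" borel borel borel] by simp
  have Bs: "B \<in> sets borel" unfolding B_def by (intro borel_open open_Times) auto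
  have gm: "g \<in> borel_measurable lborel"
  proof -
    have s1: "(\<lambda>z::real\<times>real. sin (fst z)) \<in> borel_measurable borel"
      by (intro borel_measurable_continuous_onI continuous_intros)
    have s2: "(\<lambda>z::real\<times>real. indicator B z * r\<^sup>2 * sin (fst z)) \<in> borel_measurable borel"
      by (intro borel_measurable_times borel_measurable_indicator Bs s1 borel_measurable_const)
    have "g = (\<lambda>z. ennreal (indicator B z * r\<^sup>2 * sin (fst z)))" unfolding g_def by auto
    hence "g \<in> borel_measurable borel" using measurable_comp[OF s2 measurable_ennreal] by (simp add: comp_def)
    thus ?thesis using measurable_cong_sets[of lborel borel borel borel] by simp
  qed
  define P where "P = F -` ball x \<rho>"
  have Po: "open P" unfolding P_def using Fc continuous_on_open_vimage[of UNIV F] by simp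
  hence Ps: "P \<in> sets lborel" by simp
  obtain \<phi>0 \<theta>0 where geo:
    "\<And>\<theta> \<phi>. 0 < sin \<theta> \<Longrightarrow> dist (c + r *\<^sub>R vector [sin \<theta> * cos \<phi>, sin \<theta> * sin \<phi>, cos \<theta>]) x < \<rho> \<Longrightarrow>
        \<bar>sin (\<phi> - \<phi>0)\<bar> < \<rho> / (r * sin \<theta>) \<and> \<bar>sin (\<theta> - \<theta>0)\<bar> < \<rho> / r"
    using sphere_geom[OF r \<rho>, of c x] by blast
  define T where "T = {t \<in> {0..0 + 2*pi}. \<bar>sin (t - \<theta>0)\<bar> < \<rho> / r}"
  have Ts: "T \<in> sets lborel" unfolding T_def by (rule sin_set_sets)
  define h where "h z = g z * indicator P z" for z
  have hm: "h \<in> borel_measurable lborel" unfolding h_def using gm Ps by measurable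
  have inner: "(\<integral>\<^sup>+\<phi>. h (\<theta>, \<phi>) \<partial>lborel) \<le> ennreal (12 * \<rho> * r) * indicator T \<theta>" for \<theta>
  proof (cases "\<theta> \<in> {0<..<pi}")
    case False
    hence "\<And>\<phi>. (\<theta>, \<phi>) \<notin> B" by (auto simp: B_def)
    hence "\<And>\<phi>. h (\<theta>, \<phi>) = 0" by (simp add: h_def g_def)
    thus ?thesis by simp
  next
    case True
    have st: "0 < sin \<theta>" using True by (intro sin_gt_zero) auto
    show ?thesis
    proof (cases "\<theta> \<in> T")
      case False
      have "h (\<theta>, \<phi>) = 0" for \<phi>
      proof (rule ccontr)
        assume "h (\<theta>, \<phi>) \<noteq> 0"
        hence "(\<theta>, \<phi>) \<in> P" by (auto simp: h_def indicator_def split: if_splits)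
        hence "dist (c + r *\<^sub>R vector [sin \<theta> * cos \<phi>, sin \<theta> * sin \<phi>, cos \<theta>]) x < \<rho>"
          by (simp add: P_def F_def dist_commute)
        hence "\<bar>sin (\<theta> - \<theta>0)\<bar> < \<rho> / r" using geo[OF st] by blast
        hence "\<theta> \<in> T" using True by (auto simp: T_def)
        thus False using False by simp
      qed
      thus ?thesis by simp
    next
      case Tt: True
      define \<Phi> where "\<Phi> = {t \<in> {0..0 + 2*pi}. \<bar>sin (t - \<phi>0)\<bar> < \<rho> / (r * sin \<theta>)}"
      have \<Phi>s: "\<Phi> \<in> sets lborel" unfolding \<Phi>_def by (rule sin_set_sets)
      have pw: "h (\<theta>, \<phi>) \<le> ennreal (r^2 * sin \<theta>) * indicator \<Phi> \<phi>" for \<phi>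
      proof (cases "h (\<theta>, \<phi>) = 0")
        case True thus ?thesis by simp
      next
        case False
        hence inP: "(\<theta>, \<phi>) \<in> P" and inB: "(\<theta>, \<phi>) \<in> B" by (auto simp: h_def g_def indicator_def of_bool_def split: if_splits)
        hence "dist (c + r *\<^sub>R vector [sin \<theta> * cos \<phi>, sin \<theta> * sin \<phi>, cos \<theta>]) x < \<rho>"
          by (simp add: P_def F_def dist_commute)
        hence "\<bar>sin (\<phi> - \<phi>0)\<bar> < \<rho> / (r * sin \<theta>)" using geo[OF st] by blast
        hence "\<phi> \<in> \<Phi>" using inB by (auto simp: \<Phi>_def B_def)
        thus ?thesis using inP inB by (simp add: h_def g_def)
      qed
      have "(\<integral>\<^sup>+\<phi>. h (\<theta>, \<phi>) \<partial>lborel) \<le> (\<integral>\<^sup>+\<phi>. ennreal (r^2 * sin \<theta>) * indicator \<Phi> \<phi> \<partial>lborel)"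
        by (intro nn_integral_mono pw)
      also have "\<dots> = ennreal (r^2 * sin \<theta>) * emeasure lborel \<Phi>"
        by (rule nn_integral_cmult_indicator[OF \<Phi>s])
      also have "\<dots> \<le> ennreal (r^2 * sin \<theta>) * ennreal (12 * (\<rho> / (r * sin \<theta>)))"
        unfolding \<Phi>_def using r \<rho> st by (intro mult_left_mono sin_small_set_measure) auto
      also have "\<dots> = ennreal (12 * \<rho> * r)"
      proof -
        have q: "r^2 * sin \<theta> * (12 * (\<rho> / (r * sin \<theta>))) = 12 * \<rho> * r"
          using r st by (simp add: field_simps power2_eq_square)
        have e: "ennreal (r^2 * sin \<theta>) * ennreal (12 * (\<rho> / (r * sin \<theta>))) = ennreal (r^2 * sin \<theta> * (12 * (\<rho> / (r * sin \<theta>))))"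
          using r st \<rho> by (intro ennreal_mult''[symmetric]) simp
        show ?thesis by (simp only: e q)
      qed
      finally show ?thesis using Tt by simp
    qed
  qed
  have "emeasure (sphere_measure c r) (ball x \<rho>) = emeasure (density lborel g) (F -` ball x \<rho> \<inter> space (density lborel g))"
    unfolding sphere_measure_def g_def[symmetric] B_def[symmetric] F_def[symmetric]
    by (rule emeasure_distr[OF Fm]) simp
  also have "\<dots> = (\<integral>\<^sup>+z. g z * indicator P z \<partial>lborel)"
  proof -
    have "F -` ball x \<rho> \<inter> space (density lborel g) = P" by (simp add: P_def)
    thus ?thesis using emeasure_density[OF gm Ps] by simp
  qed
  also have "\<dots> = integral\<^sup>N (lborel \<Otimes>\<^sub>M lborel) h"
    unfolding h_def lborel_prod ..
  also have "\<dots> = (\<integral>\<^sup>+\<theta>. \<integral>\<^sup>+\<phi>. h (\<theta>, \<phi>) \<partial>lborel \<partial>lborel)"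
    by (rule lborel.nn_integral_fst[symmetric]) (use hm measurable_cong_sets[of lborel borel borel borel] in \<open>simp add: lborel_prod\<close>)
  also have "\<dots> \<le> (\<integral>\<^sup>+\<theta>. ennreal (12 * \<rho> * r) * indicator T \<theta> \<partial>lborel)"
    by (intro nn_integral_mono inner)
  also have "\<dots> = ennreal (12 * \<rho> * r) * emeasure lborel T"
    by (rule nn_integral_cmult_indicator[OF Ts])
  also have "\<dots> \<le> ennreal (12 * \<rho> * r) * ennreal (12 * (\<rho> / r))"
    unfolding T_def using r \<rho> by (intro mult_left_mono sin_small_set_measure) auto
  also have "\<dots> = ennreal (144 * \<rho>^2)"
  proof -
    have q: "12 * \<rho> * r * (12 * (\<rho> / r)) = 144 * \<rho>^2"
      using r by (simp add: field_simps power2_eq_square)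
    have e: "ennreal (12 * \<rho> * r) * ennreal (12 * (\<rho> / r)) = ennreal (12 * \<rho> * r * (12 * (\<rho> / r)))"
      using r \<rho> by (intro ennreal_mult''[symmetric]) simp
    show ?thesis by (simp only: e q)
  qed
  finally show ?thesis .
qed


theorem lemma2p2:
  fixes a b :: real
  assumes "0 < a" "a < 2" "0 < b" "b < 2" "a + b > 2"
  shows "\<exists>C::real. \<forall>S \<in> plane_or_sphere_measures. \<forall>\<xi>::real^3. \<xi> \<noteq> 0 \<longrightarrow>
           (\<integral>\<^sup>+ \<eta>. ennreal (1 / (norm (\<xi> - \<eta>) powr a * norm \<eta> powr b)) \<partial>S)
             \<le> ennreal (C / norm \<xi> powr (a + b - 2))"
proof (intro exI ballI allI impI)
  fix S :: "(real^3) measure" and \<xi> :: "real^3"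
  assume S: "S \<in> plane_or_sphere_measures" and \<xi>: "\<xi> \<noteq> 0"
  have sets: "sets S = sets borel" and growth: "\<And>x r. r > 0 \<Longrightarrow> emeasure S (ball x r) \<le> ennreal (144 * r^2)"
  proof -
    from S consider (pl) p u v where "S = plane_measure p u v" "u \<bullet> u = 1" "v \<bullet> v = 1" "u \<bullet> v = 0"
      | (sp) c r where "S = sphere_measure c r" "r > 0"
      unfolding plane_or_sphere_measures_def by blast
    then have "sets S = sets borel \<and> (\<forall>x r. r > 0 \<longrightarrow> emeasure S (ball x r) \<le> ennreal (144 * r^2))"
    proof cases
      case pl
      have "emeasure S (ball x r) \<le> ennreal (144 * r^2)" if "r > 0" for x r
      proof -
        have "emeasure S (ball x r) \<le> ennreal (4 * r^2)" using plane_growth[OF pl(2-4) that] pl(1) by simp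
        also have "\<dots> \<le> ennreal (144 * r^2)" by (intro ennreal_leI) simp
        finally show ?thesis .
      qed
      thus ?thesis using pl(1) by (simp add: plane_measure_def)
    next
      case sp
      thus ?thesis using sphere_growth[OF sp(2)] by (simp add: sphere_measure_def)
    qed
    thus "sets S = sets borel" "\<And>x r. r > 0 \<Longrightarrow> emeasure S (ball x r) \<le> ennreal (144 * r^2)" by auto
  qed
  show "(\<integral>\<^sup>+ \<eta>. ennreal (1 / (norm (\<xi> - \<eta>) powr a * norm \<eta> powr b)) \<partial>S)
      \<le> ennreal (((144 * (2 powr b / (1 - 2 powr (b - 2)) + 4 / (1 - 2 powr (2 - a - b)))
           + 144 * (2 powr a / (1 - 2 powr (a - 2)) + 4 / (1 - 2 powr (2 - b - a)))) * 2 powr (a + b - 2))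
          / norm \<xi> powr (a + b - 2))"
    using main_from_growth[OF assms sets _ growth \<xi>] by simp
qed

end
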